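(* Let $k$ be a field, $S=k[x_1,\dots,x_n]$, $\mathfrak m=(x_1,\dots,x_n)$, $I=(f_1,\dots,f_r)$ a linearly presented $\mathfrak m$-primary ideal, $B=k[T_1,\dots,T_r]$, $J\subseteq B[x_1,\dots,x_n]$ the defining ideal of $\mathrm{Sym}(I)$ with minimal generators $L_1,\dots,L_N$, and $\Theta$ the Jacobian dual ($N\times n$ matrix of linear forms in the $T$'s with $\Theta(x_1,\dots,x_n)^T=(L_1,\dots,L_N)^T$). Let $N'$ be the $(n-1)\times n$ submatrix of $\Theta$ consisting of the rows corresponding to $L_{i_1},\dots,L_{i_{n-1}}$, and for $1\le i\le n$ let $\Delta_i=(-1)^i\det N'^{(i)}$, where $N'^{(i)}$ is $N'$ with its $i$-th column deleted. If $\Delta_i\ne0$ for some $i$, then (1) $\Delta_iJ\subseteq(L_{i_1},\dots,L_{i_{n-1}})+I_n(\Theta)B[x_1,\dots,x_n]$; (2) in the ring $B[x_1,\dots,x_n]$ localized by inverting $\Delta_i$, the ideal generated by $L_{i_1},\dots,L_{i_{n-1}}$ equals the ideal generated by the $2\times 2$ minors of $\begin{bmatrix}x_1&\cdots&x_n\\ \Delta_1&\cdots&\Delta_n\end{bmatrix}$.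
   Context: "Linearly presented" means $I$ is generated by forms of a common degree whose syzygy module is generated by linear syzygies $\sum_i a_i(\mathbf x)f_i=0$; $J$ is generated by the bilinear forms $\sum_i a_i(\mathbf x)T_i$ attached to these syzygies, and $L_1,\dots,L_N$ are minimal generators of $J$ (corresponding to minimal generators of the syzygy module). $I_n(\Theta)\subseteq B$ is the ideal of $n\times n$ minors of $\Theta$. *)

theory Defs
  imports "HOL-Library.Poly_Mapping" "Jordan_Normal_Form.Determinant"
begin

text \<open>Variables: X i is x_(i+1) (i < n), T j is T_(j+1) (j < r); indices are 0-based.\<close>
datatype var = X nat | T nat

type_synonym 'k mpoly = "(var \<Rightarrow>\<^sub>0 nat) \<Rightarrow>\<^sub>0 'k"

definition Var :: "var \<Rightarrow> 'k::comm_ring_1 mpoly" where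
  "Var v = Poly_Mapping.single (Poly_Mapping.single v 1) 1"

definition xv :: "nat \<Rightarrow> 'k::comm_ring_1 mpoly" where "xv i = Var (X i)"

definition mdeg :: "(var \<Rightarrow>\<^sub>0 nat) \<Rightarrow> nat" where
  "mdeg m = (\<Sum>v\<in>Poly_Mapping.keys m. Poly_Mapping.lookup m v)"

text \<open>homogeneous of degree d (the zero polynomial counts as a form of every degree)\<close>
definition homog :: "nat \<Rightarrow> 'k::comm_ring_1 mpoly \<Rightarrow> bool" where
  "homog d p \<longleftrightarrow> (\<forall>m\<in>Poly_Mapping.keys p. mdeg m = d)"

definition poly_ring :: "var set \<Rightarrow> 'k::comm_ring_1 mpoly set" where
  "poly_ring V = {p. \<forall>m\<in>Poly_Mapping.keys p. Poly_Mapping.keys m \<subseteq> V}"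

definition S_ring :: "nat \<Rightarrow> 'k::comm_ring_1 mpoly set" where
  "S_ring n = poly_ring {X i | i. i < n}"

definition B_ring :: "nat \<Rightarrow> 'k::comm_ring_1 mpoly set" where
  "B_ring r = poly_ring {T j | j. j < r}"

definition BX_ring :: "nat \<Rightarrow> nat \<Rightarrow> 'k::comm_ring_1 mpoly set" where
  "BX_ring n r = poly_ring ({X i | i. i < n} \<union> {T j | j. j < r})"

definition ideal_in :: "'a::comm_ring_1 set \<Rightarrow> 'a set \<Rightarrow> 'a set" where
  "ideal_in A G = {p. \<exists>F c. finite F \<and> F \<subseteq> G \<and> (\<forall>g\<in>F. c g \<in> A) \<and> p = (\<Sum>g\<in>F. c g * g)}"

text \<open>submodule of A^r (vectors as functions nat => A, zero beyond r) generated by V\<close>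
definition submod_in :: "'a::comm_ring_1 set \<Rightarrow> (nat \<Rightarrow> 'a) set \<Rightarrow> (nat \<Rightarrow> 'a) set" where
  "submod_in A V = {v. \<exists>F c. finite F \<and> F \<subseteq> V \<and> (\<forall>g\<in>F. c g \<in> A) \<and> v = (\<lambda>j. \<Sum>g\<in>F. c g * g j)}"

definition radical_in :: "'a::comm_ring_1 set \<Rightarrow> 'a set \<Rightarrow> 'a set" where
  "radical_in A I = {a \<in> A. \<exists>k. a ^ k \<in> I}"

definition primary_in :: "'a::comm_ring_1 set \<Rightarrow> 'a set \<Rightarrow> bool" where
  "primary_in A I \<longleftrightarrow> I \<noteq> A \<and>
     (\<forall>a\<in>A. \<forall>b\<in>A. a * b \<in> I \<longrightarrow> a \<in> I \<or> (\<exists>k. b ^ k \<in> I))"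

definition max_ideal :: "nat \<Rightarrow> 'k::comm_ring_1 mpoly set" where
  "max_ideal n = ideal_in (S_ring n) {xv i | i. i < n}"

definition m_primary :: "nat \<Rightarrow> 'k::comm_ring_1 mpoly set \<Rightarrow> bool" where
  "m_primary n I \<longleftrightarrow> primary_in (S_ring n) I \<and> radical_in (S_ring n) I = max_ideal n"

definition syz :: "nat \<Rightarrow> nat \<Rightarrow> (nat \<Rightarrow> 'k::comm_ring_1 mpoly) \<Rightarrow> (nat \<Rightarrow> 'k mpoly) set" where
  "syz n r f = {a. (\<forall>j. a j \<in> S_ring n) \<and> (\<forall>j\<ge>r. a j = 0) \<and> (\<Sum>j<r. a j * f j) = 0}"

definition linear_vec :: "(nat \<Rightarrow> 'k::comm_ring_1 mpoly) \<Rightarrow> bool" where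
  "linear_vec a \<longleftrightarrow> (\<forall>j. homog 1 (a j))"

definition linearly_presented :: "nat \<Rightarrow> nat \<Rightarrow> (nat \<Rightarrow> 'k::comm_ring_1 mpoly) \<Rightarrow> bool" where
  "linearly_presented n r f \<longleftrightarrow>
     (\<exists>d. \<forall>j<r. f j \<in> S_ring n \<and> homog d (f j)) \<and>
     syz n r f = submod_in (S_ring n) {a \<in> syz n r f. linear_vec a}"

definition minimal_generators :: "'a::comm_ring_1 set \<Rightarrow> (nat \<Rightarrow> 'a) set \<Rightarrow> nat \<Rightarrow> (nat \<Rightarrow> nat \<Rightarrow> 'a) \<Rightarrow> bool" where
  "minimal_generators A M N a \<longleftrightarrow>
     M = submod_in A {a l | l. l < N} \<and>
     (\<forall>l<N. a l \<notin> submod_in A {a l' | l'. l' < N \<and> l' \<noteq> l})"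

definition sym_form :: "nat \<Rightarrow> (nat \<Rightarrow> 'k::comm_ring_1 mpoly) \<Rightarrow> 'k mpoly" where
  "sym_form r a = (\<Sum>j<r. a j * Var (T j))"

definition max_minors :: "nat \<Rightarrow> 'a::comm_ring_1 mat \<Rightarrow> 'a set" where
  "max_minors n M = {det (mat n n (\<lambda>(a,b). M $$ (\<rho> a, b))) | \<rho>.
       strict_mono_on {..<n} \<rho> \<and> (\<forall>a<n. \<rho> a < dim_row M)}"

definition del_col :: "'a mat \<Rightarrow> nat \<Rightarrow> 'a mat" where
  "del_col M i = mat (dim_row M) (dim_col M - 1) (\<lambda>(a,b). M $$ (a, if b < i then b else Suc b))"

text \<open>contraction to the ring A of the extension of P to A localized at d\<close>
definition sat_in :: "'a::comm_ring_1 set \<Rightarrow> 'a \<Rightarrow> 'a set \<Rightarrow> 'a set" where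
  "sat_in A d P = {g \<in> A. \<exists>m. d ^ m * g \<in> P}"

definition sub_rows :: "'a mat \<Rightarrow> (nat \<Rightarrow> nat) \<Rightarrow> nat \<Rightarrow> 'a mat" where
  "sub_rows M idx m = mat m (dim_col M) (\<lambda>(t,c). M $$ (idx t, c))"

text \<open>Delta k (0-based k, i.e. the paper's Delta_(k+1)) = (-1)^(k+1) det N'^(k+1)\<close>
definition Delta :: "'a::comm_ring_1 mat \<Rightarrow> (nat \<Rightarrow> nat) \<Rightarrow> nat \<Rightarrow> nat \<Rightarrow> 'a" where
  "Delta M idx n k = (-1) ^ (k + 1) * det (del_col (sub_rows M idx (n - 1)) k)"

end

theory Submission
  imports Defs
begin

lemma pr_zero: "0 \<in> poly_ring V" unfolding poly_ring_def by simp
lemma pr_one: "1 \<in> poly_ring V" unfolding poly_ring_def by simp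
lemma pr_add: "p \<in> poly_ring V \<Longrightarrow> q \<in> poly_ring V \<Longrightarrow> p + q \<in> poly_ring V"
proof -
  assume p: "p \<in> poly_ring V" and q: "q \<in> poly_ring V"
  { fix m :: "var \<Rightarrow>\<^sub>0 nat" assume m: "m \<in> Poly_Mapping.keys (p + q)"
    then have "m \<in> Poly_Mapping.keys p \<or> m \<in> Poly_Mapping.keys q" using keys_add[of p q] by blast
    then have "Poly_Mapping.keys m \<subseteq> V" using p q unfolding poly_ring_def by blast }
  then show ?thesis unfolding poly_ring_def by blast
qed
lemma pr_uminus: "p \<in> poly_ring V \<Longrightarrow> - p \<in> poly_ring V"
  unfolding poly_ring_def by simp
lemma pr_diff: "p \<in> poly_ring V \<Longrightarrow> q \<in> poly_ring V \<Longrightarrow> p - q \<in> poly_ring V"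
  using pr_add pr_uminus by (metis diff_conv_add_uminus)
lemma pr_mult: "p \<in> poly_ring V \<Longrightarrow> q \<in> poly_ring V \<Longrightarrow> p * q \<in> poly_ring V"
proof -
  assume p: "p \<in> poly_ring V" and q: "q \<in> poly_ring V"
  { fix m :: "var \<Rightarrow>\<^sub>0 nat" assume m: "m \<in> Poly_Mapping.keys (p * q)"
    then obtain a b where ab: "m = a + b" "a \<in> Poly_Mapping.keys p" "b \<in> Poly_Mapping.keys q" using keys_mult by blast
    moreover have "Poly_Mapping.keys a \<subseteq> V" "Poly_Mapping.keys b \<subseteq> V" using p q ab unfolding poly_ring_def by blast+
    ultimately have "Poly_Mapping.keys m \<subseteq> V" using keys_add[of a b] ab(1) by blast }
  then show ?thesis unfolding poly_ring_def by auto
qed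
lemma pr_sum: "(\<And>x. x \<in> S \<Longrightarrow> f x \<in> poly_ring V) \<Longrightarrow> sum f S \<in> poly_ring V"
  by (induction S rule: infinite_finite_induct) (auto intro: pr_zero pr_add)
lemma pr_prod: "(\<And>x. x \<in> S \<Longrightarrow> f x \<in> poly_ring V) \<Longrightarrow> prod f S \<in> poly_ring V"
  by (induction S rule: infinite_finite_induct) (auto intro: pr_one pr_mult)
lemma pr_power: "p \<in> poly_ring V \<Longrightarrow> p ^ k \<in> poly_ring V"
  by (induction k) (auto intro: pr_one pr_mult)
lemma pr_sign: "(-1) ^ k \<in> poly_ring V"
  by (intro pr_power pr_uminus pr_one)
lemma pr_signof: "(signof p :: 'k::comm_ring_1 mpoly) \<in> poly_ring V"
  by (auto simp: sign_def intro: pr_one pr_uminus)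
lemma pr_det: assumes "A \<in> carrier_mat m m" "\<And>i j. i < m \<Longrightarrow> j < m \<Longrightarrow> A $$ (i,j) \<in> poly_ring V"
  shows "det A \<in> poly_ring V"
  unfolding det_def'[OF assms(1)]
  by (intro pr_sum pr_mult pr_signof pr_prod) (auto intro!: assms(2))
lemma pr_Var: "v \<in> V \<Longrightarrow> (Var v :: 'k::comm_ring_1 mpoly) \<in> poly_ring V"
  unfolding poly_ring_def Var_def by simp
lemma pr_mono: "V \<subseteq> W \<Longrightarrow> poly_ring V \<subseteq> poly_ring W"
  unfolding poly_ring_def by auto

lemma id_zero: "0 \<in> ideal_in R G"
  unfolding ideal_in_def by (rule CollectI, rule exI[of _ "{}"]) auto

lemma id_gen: "(1::'a::comm_ring_1) \<in> R \<Longrightarrow> g \<in> G \<Longrightarrow> g \<in> ideal_in R G"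
  unfolding ideal_in_def by (rule CollectI, rule exI[of _ "{g}"], rule exI[of _ "\<lambda>_. 1"]) auto

lemma id_add:
  assumes z: "(0::'a::comm_ring_1) \<in> R" and addR: "\<And>x y. x \<in> R \<Longrightarrow> y \<in> R \<Longrightarrow> x + y \<in> R"
    and p: "p \<in> ideal_in R G" and q: "q \<in> ideal_in R G"
  shows "p + q \<in> ideal_in R G"
proof -
  obtain F1 c1 where 1: "finite F1" "F1 \<subseteq> G" "\<forall>g\<in>F1. c1 g \<in> R" "p = (\<Sum>g\<in>F1. c1 g * g)"
    using p unfolding ideal_in_def by blast
  obtain F2 c2 where 2: "finite F2" "F2 \<subseteq> G" "\<forall>g\<in>F2. c2 g \<in> R" "q = (\<Sum>g\<in>F2. c2 g * g)"
    using q unfolding ideal_in_def by blast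
  define d1 where "d1 g = (if g \<in> F1 then c1 g else 0)" for g
  define d2 where "d2 g = (if g \<in> F2 then c2 g else 0)" for g
  have e1: "(\<Sum>g\<in>F1 \<union> F2. d1 g * g) = p" unfolding 1(4)
    by (rule sum.mono_neutral_cong_right) (auto simp: d1_def 1(1) 2(1))
  have e2: "(\<Sum>g\<in>F1 \<union> F2. d2 g * g) = q" unfolding 2(4)
    by (rule sum.mono_neutral_cong_right) (auto simp: d2_def 1(1) 2(1))
  have "p + q = (\<Sum>g\<in>F1 \<union> F2. (d1 g + d2 g) * g)"
    unfolding distrib_right sum.distrib e1 e2 ..
  moreover have "\<forall>g\<in>F1 \<union> F2. d1 g + d2 g \<in> R" using 1(3) 2(3) z addR unfolding d1_def d2_def by auto
  moreover have "finite (F1 \<union> F2)" "F1 \<union> F2 \<subseteq> G" using 1 2 by auto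
  ultimately show ?thesis unfolding ideal_in_def mem_Collect_eq
    by (intro exI[of _ "F1 \<union> F2"] exI[of _ "\<lambda>g. d1 g + d2 g"]) simp
qed

lemma id_mult:
  assumes mulR: "\<And>x y. x \<in> R \<Longrightarrow> y \<in> R \<Longrightarrow> x * y \<in> R"
    and c: "c \<in> R" and p: "p \<in> ideal_in R G"
  shows "c * p \<in> ideal_in R (G::'a::comm_ring_1 set)"
proof -
  obtain F1 c1 where 1: "finite F1" "F1 \<subseteq> G" "\<forall>g\<in>F1. c1 g \<in> R" "p = (\<Sum>g\<in>F1. c1 g * g)"
    using p unfolding ideal_in_def by blast
  have "c * p = (\<Sum>g\<in>F1. (c * c1 g) * g)" unfolding 1(4) by (simp add: sum_distrib_left mult.assoc)
  moreover have "\<forall>g\<in>F1. c * c1 g \<in> R" using 1(3) c mulR by auto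
  ultimately show ?thesis unfolding ideal_in_def mem_Collect_eq using 1(1,2)
    by (intro exI[of _ F1] exI[of _ "\<lambda>g. c * c1 g"]) simp
qed


lemma id_sum:
  "finite S \<Longrightarrow> (\<And>s. s \<in> S \<Longrightarrow> f s \<in> ideal_in (poly_ring V) G) \<Longrightarrow> sum f S \<in> ideal_in (poly_ring V) G"
  by (induction S rule: finite_induct) (auto intro: id_zero id_add pr_zero pr_add)

lemma id_addP: "p \<in> ideal_in (poly_ring V) G \<Longrightarrow> q \<in> ideal_in (poly_ring V) G \<Longrightarrow> p + q \<in> ideal_in (poly_ring V) G"
  by (rule id_add) (auto intro: pr_zero pr_add)

lemma id_multP: "c \<in> poly_ring V \<Longrightarrow> p \<in> ideal_in (poly_ring V) G \<Longrightarrow> c * p \<in> ideal_in (poly_ring V) G"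
  by (rule id_mult) (auto intro: pr_mult)

lemma id_uminusP: "p \<in> ideal_in (poly_ring V) G \<Longrightarrow> - p \<in> ideal_in (poly_ring V) G"
  using id_multP[of "-1" V p G] by (simp add: pr_one pr_uminus)

lemma id_diffP: "p \<in> ideal_in (poly_ring V) G \<Longrightarrow> q \<in> ideal_in (poly_ring V) G \<Longrightarrow> p - q \<in> ideal_in (poly_ring V) G"
proof -
  assume p: "p \<in> ideal_in (poly_ring V) G" and q: "q \<in> ideal_in (poly_ring V) G"
  have "p + - q \<in> ideal_in (poly_ring V) G" by (rule id_addP[OF p id_uminusP[OF q]])
  then show ?thesis by (simp only: diff_conv_add_uminus)
qed

lemma id_genP: "g \<in> G \<Longrightarrow> g \<in> ideal_in (poly_ring V) G"
  by (rule id_gen) (auto intro: pr_one)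

lemma id_sub: assumes "G \<subseteq> ideal_in (poly_ring V) H" shows "ideal_in (poly_ring V) G \<subseteq> ideal_in (poly_ring V) H"
proof
  fix p assume "p \<in> ideal_in (poly_ring V) G"
  then obtain F c where 1: "finite F" "F \<subseteq> G" "\<forall>g\<in>F. c g \<in> poly_ring V" "p = (\<Sum>g\<in>F. c g * g)"
    unfolding ideal_in_def by blast
  show "p \<in> ideal_in (poly_ring V) H" unfolding 1(4) using 1 assms
    by (intro id_sum id_multP) auto
qed

definition Amat :: "'a mat \<Rightarrow> (nat \<Rightarrow> nat) \<Rightarrow> nat \<Rightarrow> nat \<Rightarrow> (nat \<Rightarrow> 'a) \<Rightarrow> 'a mat" where
  "Amat Th idx n p u = mat n n (\<lambda>(a,b). if a < p then Th $$ (idx a, b) else if a = p then u b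
      else Th $$ (idx (a - 1), b))"

lemma Amat_carrier: "Amat Th idx n p u \<in> carrier_mat n n"
  unfolding Amat_def by simp

lemma Amat_delete: "p < n \<Longrightarrow> k < n \<Longrightarrow> dim_col Th = n \<Longrightarrow>
   mat_delete (Amat Th idx n p u) p k = del_col (sub_rows Th idx (n - 1)) k"
  unfolding mat_delete_def del_col_def sub_rows_def Amat_def by (rule eq_matI) auto

lemma Amat_cof: assumes "p < n" "k < n" "dim_col Th = n"
  shows "cofactor (Amat Th idx n p u) p k = (-1) ^ (p + 1) * Delta Th idx n k"
proof -
  have s: "(-1::'a::comm_ring_1) ^ (p + k) = (-1) ^ (p + 1) * (-1) ^ (k + 1)"
    by (simp add: power_add)
  show ?thesis unfolding cofactor_def Delta_def Amat_delete[OF assms] s by (simp add: mult_ac)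
qed

lemma adj_identity: assumes A: "A \<in> carrier_mat n n" and k: "k < n"
  shows "det A * x k = (\<Sum>t<n. cofactor A t k * (\<Sum>c<n. A $$ (t, c) * x c))"
proof -
  have e: "(\<Sum>t<n. A $$ (t, c) * cofactor A t k) = (if k = c then det A else 0)" if c: "c < n" for c
  proof -
    have "(adj_mat A * A) $$ (k, c) = (\<Sum>t<n. A $$ (t, c) * cofactor A t k)"
      unfolding times_mat_def scalar_prod_def adj_mat_def using c k A by (auto intro: sum.cong)
    also have "adj_mat A * A = det A \<cdot>\<^sub>m 1\<^sub>m n" by (rule adj_mat(3)[OF A])
    finally show ?thesis using c k by auto
  qed
  have "(\<Sum>t<n. cofactor A t k * (\<Sum>c<n. A $$ (t, c) * x c))
      = (\<Sum>t<n. \<Sum>c<n. x c * (A $$ (t, c) * cofactor A t k))"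
    by (simp add: sum_distrib_left mult_ac)
  also have "\<dots> = (\<Sum>c<n. \<Sum>t<n. x c * (A $$ (t, c) * cofactor A t k))" by (rule sum.swap)
  also have "\<dots> = (\<Sum>c<n. x c * (\<Sum>t<n. A $$ (t, c) * cofactor A t k))" by (simp add: sum_distrib_left)
  also have "\<dots> = (\<Sum>c<n. if k = c then det A * x c else 0)" using e by (intro sum.cong) (auto simp: mult_ac)
  also have "\<dots> = det A * x k" using k by simp
  finally show ?thesis by simp
qed

lemma pr_cof: assumes A: "A \<in> carrier_mat n n" and ent: "\<And>i j. i < n \<Longrightarrow> j < n \<Longrightarrow> A $$ (i, j) \<in> poly_ring V"
  shows "cofactor A t k \<in> poly_ring V"
  unfolding cofactor_def
proof (intro pr_mult pr_sign pr_det)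
  show "mat_delete A t k \<in> carrier_mat (n - 1) (n - 1)" using mat_delete_carrier[OF A] .
  fix i j assume "i < n - 1" "j < n - 1"
  then show "mat_delete A t k $$ (i, j) \<in> poly_ring V" using A unfolding mat_delete_def
    by (auto intro!: ent)
qed

lemma key:
  fixes Th :: "'k::comm_ring_1 mpoly mat"
  assumes dims: "dim_col Th = n"
    and ent: "\<And>l c. l < N \<Longrightarrow> c < n \<Longrightarrow> Th $$ (l, c) \<in> poly_ring V"
    and idxN: "\<And>t. t < n - 1 \<Longrightarrow> idx t < N"
    and uR: "\<And>c. c < n \<Longrightarrow> u c \<in> poly_ring V"
    and p: "p < n" and k: "k < n"
  shows "det (Amat Th idx n p u) * x k - (-1) ^ (p + 1) * Delta Th idx n k * (\<Sum>c<n. u c * x c)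
     \<in> ideal_in (poly_ring V) {(\<Sum>c<n. Th $$ (idx t, c) * x c) | t. t < n - 1}"
proof -
  define A where "A = Amat Th idx n p u"
  have A: "A \<in> carrier_mat n n" unfolding A_def by (rule Amat_carrier)
  have entA: "A $$ (i, j) \<in> poly_ring V" if "i < n" "j < n" for i j
  proof -
    consider "i < p" | "i = p" | "i > p" by linarith
    then show ?thesis
    proof cases
      case 1 then show ?thesis using that p unfolding A_def Amat_def by (simp add: ent idxN)
    next
      case 2 then show ?thesis using that p unfolding A_def Amat_def by (simp add: uR)
    next
      case 3 then show ?thesis using that p unfolding A_def Amat_def by (simp add: ent idxN)
    qed
  qed
  have "det A * x k = (\<Sum>t<n. cofactor A t k * (\<Sum>c<n. A $$ (t, c) * x c))"
    by (rule adj_identity[OF A k])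
  also have "\<dots> = cofactor A p k * (\<Sum>c<n. A $$ (p, c) * x c)
      + (\<Sum>t\<in>{..<n} - {p}. cofactor A t k * (\<Sum>c<n. A $$ (t, c) * x c))"
    using p by (subst sum.remove[of _ p]) auto
  also have "cofactor A p k = (-1) ^ (p + 1) * Delta Th idx n k"
    unfolding A_def by (rule Amat_cof[OF p k dims])
  also have "(\<Sum>c<n. A $$ (p, c) * x c) = (\<Sum>c<n. u c * x c)"
    using p unfolding A_def Amat_def by (intro sum.cong) auto
  finally have eq: "det A * x k - (-1) ^ (p + 1) * Delta Th idx n k * (\<Sum>c<n. u c * x c)
     = (\<Sum>t\<in>{..<n} - {p}. cofactor A t k * (\<Sum>c<n. A $$ (t, c) * x c))" by simp
  show ?thesis unfolding A_def[symmetric] eq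
  proof (rule id_sum)
    fix t assume t: "t \<in> {..<n} - {p}"
    have cR: "cofactor A t k \<in> poly_ring V" by (rule pr_cof[OF A entA])
    have "(\<Sum>c<n. A $$ (t, c) * x c) \<in> ideal_in (poly_ring V) {(\<Sum>c<n. Th $$ (idx t, c) * x c) | t. t < n - 1}"
    proof (rule id_genP)
      show "(\<Sum>c<n. A $$ (t, c) * x c) \<in> {(\<Sum>c<n. Th $$ (idx t, c) * x c) | t. t < n - 1}"
      proof (cases "t < p")
        case True
        then have "(\<Sum>c<n. A $$ (t, c) * x c) = (\<Sum>c<n. Th $$ (idx t, c) * x c)"
          using t unfolding A_def Amat_def by (intro sum.cong) auto
        then show ?thesis using True p by auto
      next
        case False
        then have "(\<Sum>c<n. A $$ (t, c) * x c) = (\<Sum>c<n. Th $$ (idx (t - 1), c) * x c)"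
          using t unfolding A_def Amat_def by (intro sum.cong) auto
        moreover have "t - 1 < n - 1" using t False by auto
        ultimately show ?thesis by blast
      qed
    qed
    then show "cofactor A t k * (\<Sum>c<n. A $$ (t, c) * x c) \<in> ideal_in (poly_ring V) {(\<Sum>c<n. Th $$ (idx t, c) * x c) | t. t < n - 1}"
      by (rule id_multP[OF cR])
  qed simp
qed


lemma det_Amat: assumes p: "p < n" and dc: "dim_col Th = n"
  shows "det (Amat Th idx n p u) = (-1) ^ (p + 1) * (\<Sum>j<n. u j * Delta Th idx n j)"
proof -
  let ?A = "Amat Th idx n p u"
  have "det ?A = (\<Sum>j<n. ?A $$ (p, j) * cofactor ?A p j)"
    by (rule laplace_expansion_row[OF Amat_carrier p])
  also have "\<dots> = (\<Sum>j<n. (-1) ^ (p + 1) * (u j * Delta Th idx n j))"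
  proof (rule sum.cong[OF refl])
    fix j assume j: "j \<in> {..<n}"
    then have jn: "j < n" by simp
    have 1: "?A $$ (p, j) = u j" unfolding Amat_def using p jn by simp
    have 2: "cofactor ?A p j = (-1) ^ (p + 1) * Delta Th idx n j"
      by (rule Amat_cof[OF p jn dc])
    show "?A $$ (p, j) * cofactor ?A p j = (-1) ^ (p + 1) * (u j * Delta Th idx n j)"
      unfolding 1 2 by (rule mult.left_commute)
  qed
  also have "\<dots> = (-1) ^ (p + 1) * (\<Sum>j<n. u j * Delta Th idx n j)"
    by (rule sum_distrib_left[symmetric])
  finally show ?thesis .
qed

lemma id_scale: assumes d: "d \<in> poly_ring V" and G: "\<And>g. g \<in> G \<Longrightarrow> d * g \<in> ideal_in (poly_ring V) H"
  and h: "h \<in> ideal_in (poly_ring V) G"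
  shows "d * h \<in> ideal_in (poly_ring V) H"
proof -
  obtain F c where 1: "finite F" "F \<subseteq> G" "\<forall>g\<in>F. c g \<in> poly_ring V" "h = (\<Sum>g\<in>F. c g * g)"
    using h unfolding ideal_in_def by blast
  have "d * h = (\<Sum>g\<in>F. c g * (d * g))" unfolding 1(4) by (simp add: sum_distrib_left mult_ac)
  also have "\<dots> \<in> ideal_in (poly_ring V) H"
  proof (rule id_sum)
    fix g assume g: "g \<in> F"
    have "d * g \<in> ideal_in (poly_ring V) H" using g 1(2) by (intro G) blast
    moreover have "c g \<in> poly_ring V" using g 1(3) by blast
    ultimately show "c g * (d * g) \<in> ideal_in (poly_ring V) H" by (rule id_multP[rotated])
  qed (rule 1(1))
  finally show ?thesis .
qed

theorem corollary2p10:
  fixes n r N i :: nat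
    and f :: "nat \<Rightarrow> 'k::field mpoly"
    and a :: "nat \<Rightarrow> nat \<Rightarrow> 'k mpoly"
    and \<Theta> :: "'k mpoly mat"
    and idx :: "nat \<Rightarrow> nat"
  assumes f_S: "\<forall>j<r. f j \<in> S_ring n"
    and I_primary: "m_primary n (ideal_in (S_ring n) {f j | j. j < r})"
    and lin_pres: "linearly_presented n r f"
    and a_min: "minimal_generators (S_ring n) (syz n r f) N a"
    and a_lin: "\<forall>l<N. linear_vec (a l)"
    and \<Theta>_dim: "dim_row \<Theta> = N" "dim_col \<Theta> = n"
    and \<Theta>_lin: "\<forall>l<N. \<forall>c<n. \<Theta> $$ (l, c) \<in> B_ring r \<and> homog 1 (\<Theta> $$ (l, c))"
    and \<Theta>_jac: "\<forall>l<N. (\<Sum>c<n. \<Theta> $$ (l, c) * xv c) = sym_form r (a l)"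
    and idx: "strict_mono_on {..<n - 1} idx" "\<forall>t<n - 1. idx t < N"
    and i: "i < n" "Delta \<Theta> idx n i \<noteq> 0"
  shows "({Delta \<Theta> idx n i * g | g. g \<in> ideal_in (BX_ring n r) {sym_form r (a l) | l. l < N}}
           \<subseteq> ideal_in (BX_ring n r)
                ({sym_form r (a (idx t)) | t. t < n - 1} \<union> max_minors n \<Theta>))
         \<and> (sat_in (BX_ring n r) (Delta \<Theta> idx n i)
           (ideal_in (BX_ring n r) {sym_form r (a (idx t)) | t. t < n - 1})
         = sat_in (BX_ring n r) (Delta \<Theta> idx n i)
           (ideal_in (BX_ring n r)
              {xv b * Delta \<Theta> idx n c - xv c * Delta \<Theta> idx n b | b c. b < c \<and> c < n}))"
proof -
  define V where "V = {X i | i. i < n} \<union> {T j | j. j < r}"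
  have R: "BX_ring n r = poly_ring V" unfolding BX_ring_def V_def ..
  define D where "D = Delta \<Theta> idx n"
  define G1 where "G1 = {(\<Sum>c<n. \<Theta> $$ (idx t, c) * xv c) | t. t < n - 1}"
  define M2 where "M2 = {xv b * D c - xv c * D b | b c. b < c \<and> c < n}"
  have ThR: "\<Theta> $$ (l, c) \<in> poly_ring V" if "l < N" "c < n" for l c
  proof -
    have "\<Theta> $$ (l, c) \<in> B_ring r" using \<Theta>_lin that by blast
    moreover have "B_ring r \<subseteq> (poly_ring V :: 'k mpoly set)" unfolding B_ring_def V_def by (rule pr_mono) auto
    ultimately show ?thesis by blast
  qed
  have idxN: "idx t < N" if "t < n - 1" for t using idx(2) that by blast
  have xR: "xv c \<in> poly_ring V" if "c < n" for c
    unfolding xv_def V_def using that by (intro pr_Var) auto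
  have DR: "D k \<in> poly_ring V" for k
    unfolding D_def Delta_def
  proof (intro pr_mult pr_sign pr_det)
    show "del_col (sub_rows \<Theta> idx (n - 1)) k \<in> carrier_mat (n - 1) (n - 1)"
      unfolding del_col_def sub_rows_def using \<Theta>_dim by simp
    fix a b assume ab: "a < n - 1" "b < n - 1"
    then show "del_col (sub_rows \<Theta> idx (n - 1)) k $$ (a, b) \<in> poly_ring V"
      unfolding del_col_def sub_rows_def using \<Theta>_dim by (simp add: ThR idxN)
  qed
  have Lsum: "sym_form r (a l) = (\<Sum>c<n. \<Theta> $$ (l, c) * xv c)" if "l < N" for l
    using \<Theta>_jac that by simp
  have Gset: "{sym_form r (a (idx t)) | t. t < n - 1} = G1"
  proof (rule equalityI; rule subsetI)
    fix x assume "x \<in> {sym_form r (a (idx t)) | t. t < n - 1}"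
    then obtain t where t: "t < n - 1" "x = sym_form r (a (idx t))" by blast
    then have "x = (\<Sum>c<n. \<Theta> $$ (idx t, c) * xv c)" using Lsum[OF idxN[OF t(1)]] by simp
    then show "x \<in> G1" unfolding G1_def using t(1) by blast
  next
    fix x assume "x \<in> G1"
    then obtain t where t: "t < n - 1" "x = (\<Sum>c<n. \<Theta> $$ (idx t, c) * xv c)" unfolding G1_def by blast
    then have "x = sym_form r (a (idx t))" using Lsum[OF idxN[OF t(1)]] by simp
    then show "x \<in> {sym_form r (a (idx t)) | t. t < n - 1}" using t(1) by blast
  qed
  have n1: "n \<ge> 1" using i by simp
  have keyx: "det (Amat \<Theta> idx n p u) * xv k - (-1) ^ (p + 1) * D k * (\<Sum>c<n. u c * xv c)
     \<in> ideal_in (poly_ring V) G1" if "p < n" "k < n" "\<And>c. c < n \<Longrightarrow> u c \<in> poly_ring V" for p k u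
    unfolding G1_def D_def by (rule key[OF \<Theta>_dim(2) ThR idxN that(3) that(1,2)])
  have two: "D k * xv b - D b * xv k \<in> ideal_in (poly_ring V) G1" if b: "b < n" and k: "k < n" for b k
  proof -
    define u where "u c = (if c = b then 1 else 0 :: 'k mpoly)" for c
    have uR: "u c \<in> poly_ring V" for c unfolding u_def by (auto intro: pr_one pr_zero)
    have s1: "(\<Sum>c<n. u c * xv c) = xv b" 
    proof -
      have "(\<Sum>c<n. u c * xv c) = (\<Sum>c<n. if c = b then xv c else 0)" by (intro sum.cong) (auto simp: u_def)
      also have "\<dots> = xv b" using b by (simp add: sum.delta)
      finally show ?thesis .
    qed
    have s2: "(\<Sum>j<n. u j * D j) = D b"
    proof -
      have "(\<Sum>j<n. u j * D j) = (\<Sum>c<n. if c = b then D c else 0)" by (intro sum.cong) (auto simp: u_def)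
      also have "\<dots> = D b" using b by (simp add: sum.delta)
      finally show ?thesis .
    qed
    have "det (Amat \<Theta> idx n 0 u) = - D b" using det_Amat[OF _ \<Theta>_dim(2), of 0 idx u] n1 s2
      unfolding D_def by simp
    moreover have "det (Amat \<Theta> idx n 0 u) * xv k - (-1) ^ (0 + 1) * D k * (\<Sum>c<n. u c * xv c) \<in> ideal_in (poly_ring V) G1"
      by (rule keyx) (use n1 k uR in auto)
    ultimately have "- D b * xv k - (-1) ^ (0 + 1) * D k * xv b \<in> ideal_in (poly_ring V) G1"
      unfolding s1 by simp
    moreover have "- D b * xv k - (-1) ^ (0 + 1) * D k * xv b = D k * xv b - D b * xv k"
      by (simp add: algebra_simps)
    ultimately show ?thesis by simp
  qed
  have zero: "(\<Sum>c<n. \<Theta> $$ (idx t, c) * D c) = 0" if t: "t < n - 1" for t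
  proof -
    define u where "u c = \<Theta> $$ (idx t, c)" for c
    have "det (Amat \<Theta> idx n 0 u) = 0"
    proof (rule det_identical_rows[OF Amat_carrier, of 0 "t + 1"])
      show "row (Amat \<Theta> idx n 0 u) 0 = row (Amat \<Theta> idx n 0 u) (t + 1)"
        using t by (intro eq_vecI) (auto simp: Amat_def u_def)
    qed (use t in auto)
    then show ?thesis using det_Amat[OF _ \<Theta>_dim(2), of 0 idx u] n1 unfolding D_def u_def by simp
  qed
  have M2sub: "M2 \<subseteq> ideal_in (poly_ring V) G1"
  proof
    fix g assume "g \<in> M2"
    then obtain b c where g: "g = xv b * D c - xv c * D b" "b < c" "c < n" unfolding M2_def by blast
    show "g \<in> ideal_in (poly_ring V) G1" using two[of b c] g by (simp add: mult_ac)
  qed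
  have diffM2: "xv c * D i - xv i * D c \<in> ideal_in (poly_ring V) M2" if c: "c < n" for c
  proof -
    consider "c < i" | "c = i" | "i < c" by linarith
    then show ?thesis
    proof cases
      case 1 then show ?thesis using i(1) unfolding M2_def by (intro id_genP) blast
    next
      case 2 then show ?thesis by (simp add: id_zero)
    next
      case 3
      then have "xv i * D c - xv c * D i \<in> ideal_in (poly_ring V) M2"
        using c unfolding M2_def by (intro id_genP) blast
      from id_uminusP[OF this] show ?thesis by simp
    qed
  qed
  have G1M2: "D i * g \<in> ideal_in (poly_ring V) M2" if "g \<in> G1" for g
  proof -
    obtain t where t: "t < n - 1" "g = (\<Sum>c<n. \<Theta> $$ (idx t, c) * xv c)" using \<open>g \<in> G1\<close> unfolding G1_def by blast
    have "D i * g = (\<Sum>c<n. \<Theta> $$ (idx t, c) * (xv c * D i - xv i * D c)) + xv i * (\<Sum>c<n. \<Theta> $$ (idx t, c) * D c)"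
    proof -
      have "(\<Sum>c<n. \<Theta> $$ (idx t, c) * (xv c * D i - xv i * D c))
          = (\<Sum>c<n. D i * (\<Theta> $$ (idx t, c) * xv c) - xv i * (\<Theta> $$ (idx t, c) * D c))"
        by (intro sum.cong refl) (simp add: algebra_simps)
      also have "\<dots> = D i * (\<Sum>c<n. \<Theta> $$ (idx t, c) * xv c) - xv i * (\<Sum>c<n. \<Theta> $$ (idx t, c) * D c)"
        by (simp only: sum_subtractf sum_distrib_left)
      finally show ?thesis unfolding t(2) by simp
    qed
    also have "\<dots> = (\<Sum>c<n. \<Theta> $$ (idx t, c) * (xv c * D i - xv i * D c))" using zero[OF t(1)] by simp
    also have "\<dots> \<in> ideal_in (poly_ring V) M2"
    proof (rule id_sum)
      fix c assume c: "c \<in> {..<n}"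
      have "\<Theta> $$ (idx t, c) \<in> poly_ring V" using t(1) c by (intro ThR idxN) auto
      moreover have "xv c * D i - xv i * D c \<in> ideal_in (poly_ring V) M2" using c by (intro diffM2) auto
      ultimately show "\<Theta> $$ (idx t, c) * (xv c * D i - xv i * D c) \<in> ideal_in (poly_ring V) M2"
        by (rule id_multP)
    qed simp
    finally show ?thesis .
  qed
  have part2: "sat_in (poly_ring V) (D i) (ideal_in (poly_ring V) G1) = sat_in (poly_ring V) (D i) (ideal_in (poly_ring V) M2)"
  proof
    show "sat_in (poly_ring V) (D i) (ideal_in (poly_ring V) G1) \<subseteq> sat_in (poly_ring V) (D i) (ideal_in (poly_ring V) M2)"
    proof
      fix g assume "g \<in> sat_in (poly_ring V) (D i) (ideal_in (poly_ring V) G1)"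
      then obtain m where g: "g \<in> poly_ring V" "D i ^ m * g \<in> ideal_in (poly_ring V) G1" unfolding sat_in_def by blast
      have "D i * (D i ^ m * g) \<in> ideal_in (poly_ring V) M2" by (rule id_scale[OF DR G1M2 g(2)])
      then have "D i ^ Suc m * g \<in> ideal_in (poly_ring V) M2" by (simp add: mult.assoc)
      then show "g \<in> sat_in (poly_ring V) (D i) (ideal_in (poly_ring V) M2)" using g(1) unfolding sat_in_def by blast
    qed
    show "sat_in (poly_ring V) (D i) (ideal_in (poly_ring V) M2) \<subseteq> sat_in (poly_ring V) (D i) (ideal_in (poly_ring V) G1)"
      using id_sub[OF M2sub] unfolding sat_in_def by blast
  qed
  define I3 where "I3 = ideal_in (poly_ring V) (G1 \<union> max_minors n \<Theta>)"
  have G1I3: "ideal_in (poly_ring V) G1 \<subseteq> I3" unfolding I3_def by (rule id_sub) (auto intro: id_genP)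
  have one: "D i * (\<Sum>c<n. \<Theta> $$ (l, c) * xv c) \<in> I3" if l: "l < N" for l
  proof (cases "\<exists>t<n - 1. idx t = l")
    case True
    then obtain t where t: "t < n - 1" "idx t = l" by blast
    then have "(\<Sum>c<n. \<Theta> $$ (l, c) * xv c) \<in> I3" unfolding I3_def G1_def by (intro id_genP) blast
    then show ?thesis unfolding I3_def by (rule id_multP[OF DR])
  next
    case False
    define P where "P q = (q = n - 1 \<or> l < idx q)" for q
    define p where "p = (LEAST q. P q)"
    have Pn: "P (n - 1)" unfolding P_def by simp
    have pn: "p \<le> n - 1" unfolding p_def by (rule Least_le[of P, OF Pn])
    have Pp: "P p" unfolding p_def by (rule LeastI[of P, OF Pn])
    have lt: "idx t < l" if "t < p" for t
    proof -
      have "\<not> P t" using that unfolding p_def by (rule not_less_Least[of t P])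
      then have "\<not> l < idx t" "t < n - 1" unfolding P_def using that pn by auto
      moreover have "idx t \<noteq> l" using False \<open>t < n - 1\<close> by blast
      ultimately show ?thesis by simp
    qed
    have gt: "l < idx t" if "p \<le> t" "t < n - 1" for t
    proof -
      have "p \<noteq> n - 1" using that by simp
      then have "l < idx p" using Pp unfolding P_def by simp
      moreover have "idx p \<le> idx t"
      proof (cases "p = t")
        case False
        then have "p < t" using that by simp
        then have "idx p < idx t" using that by (intro strict_mono_onD[OF idx(1)]) auto
        then show ?thesis by simp
      qed simp
      ultimately show ?thesis by simp
    qed
    have mono: "idx s < idx t" if "s < t" "t < n - 1" for s t
      using that by (intro strict_mono_onD[OF idx(1)]) auto
    have p: "p < n" using pn n1 by simp
    define \<rho> where "\<rho> a = (if a < p then idx a else if a = p then l else idx (a - 1))" for a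
    define u where "u c = \<Theta> $$ (l, c)" for c
    have Aeq: "Amat \<Theta> idx n p u = mat n n (\<lambda>(a, b). \<Theta> $$ (\<rho> a, b))"
      unfolding Amat_def \<rho>_def u_def by (rule eq_matI) auto
    have sm: "strict_mono_on {..<n} \<rho>"
      unfolding strict_mono_on_def
    proof (intro allI impI)
      fix a b :: nat assume ab: "a \<in> {..<n} \<and> b \<in> {..<n} \<and> a < b"
      have bn: "b < n" "a < b" using ab by auto
      show "\<rho> a < \<rho> b"
      proof (cases "a < p")
        case True
        consider "b < p" | "b = p" | "b > p" by linarith
        then show ?thesis
        proof cases
          case 1 then show ?thesis using True ab mono[of a b] pn unfolding \<rho>_def by simp
        next
          case 2 then show ?thesis using True lt[of a] unfolding \<rho>_def by simp
        next
          case 3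
          have "idx a < l" using lt[OF True] .
          moreover have "l < idx (b - 1)" by (rule gt) (use 3 bn in arith)+
          ultimately show ?thesis using True 3 unfolding \<rho>_def by simp
        qed
      next
        case False
        show ?thesis
        proof (cases "a = p")
          case True
          have "l < idx (b - 1)" by (rule gt) (use True bn in arith)+
          then show ?thesis using ab True unfolding \<rho>_def by simp
        next
          case F2: False
          then have "p < a" using False by simp
          have "idx (a - 1) < idx (b - 1)" by (rule mono) (use \<open>p < a\<close> bn in arith)+
          then show ?thesis using ab \<open>p < a\<close> unfolding \<rho>_def by simp
        qed
      qed
    qed
    have \<rho>N: "\<forall>a<n. \<rho> a < N" unfolding \<rho>_def using idxN l pn by (auto intro!: idxN)
    have detI: "det (Amat \<Theta> idx n p u) \<in> I3"
      unfolding I3_def Aeq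
    proof (rule id_genP)
      show "det (mat n n (\<lambda>(a, b). \<Theta> $$ (\<rho> a, b))) \<in> G1 \<union> max_minors n \<Theta>"
        unfolding max_minors_def \<Theta>_dim using sm \<rho>N by blast
    qed
    have k1: "det (Amat \<Theta> idx n p u) * xv i - (-1) ^ (p + 1) * D i * (\<Sum>c<n. u c * xv c) \<in> I3"
    proof -
      have "\<And>c. c < n \<Longrightarrow> u c \<in> poly_ring V" unfolding u_def using ThR[OF l] .
      from keyx[of p i u, OF p i(1) this] show ?thesis using G1I3 by blast
    qed
    have "(-1) ^ (p + 1) * D i * (\<Sum>c<n. u c * xv c) \<in> I3"
    proof -
      have "xv i * det (Amat \<Theta> idx n p u) \<in> I3" unfolding I3_def
        by (rule id_multP[OF xR[OF i(1)]]) (use detI I3_def in simp)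
      from id_diffP[OF this[unfolded I3_def] k1[unfolded I3_def]]
      show ?thesis unfolding I3_def by (simp add: mult_ac)
    qed
    from id_multP[OF pr_sign[of "p + 1"] this[unfolded I3_def]]
    have "((-1) ^ (p + 1) * (-1) ^ (p + 1)) * (D i * (\<Sum>c<n. u c * xv c)) \<in> I3" unfolding I3_def
      by (simp add: mult.assoc)
    moreover have "((-1::'k mpoly) ^ (p + 1) * (-1) ^ (p + 1)) = ((-1) * (-1)) ^ (p + 1)"
      by (rule power_mult_distrib[symmetric])
    moreover have "((-1::'k mpoly) * (-1)) ^ (p + 1) = 1" by simp
    ultimately show ?thesis unfolding u_def by simp
  qed
  have part1: "{D i * g | g. g \<in> ideal_in (poly_ring V) {sym_form r (a l) | l. l < N}} \<subseteq> I3"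
  proof
    fix x assume "x \<in> {D i * g | g. g \<in> ideal_in (poly_ring V) {sym_form r (a l) | l. l < N}}"
    then obtain g where x: "x = D i * g" "g \<in> ideal_in (poly_ring V) {sym_form r (a l) | l. l < N}" by blast
    show "x \<in> I3" unfolding x(1) I3_def
    proof (rule id_scale[OF DR _ x(2)])
      fix h assume "h \<in> {sym_form r (a l) | l. l < N}"
      then obtain l where "l < N" "h = sym_form r (a l)" by blast
      then show "D i * h \<in> ideal_in (poly_ring V) (G1 \<union> max_minors n \<Theta>)"
        using one[of l] Lsum[of l] unfolding I3_def by simp
    qed
  qed
  show ?thesis unfolding R Gset D_def[symmetric] M2_def[symmetric] I3_def[symmetric]
    by (rule conjI[OF part1 part2])
qed

end
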